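(* Let $\{\epsilon_n\}_{n\ge1}$ be a sequence of positive real numbers and $\{a_n\}_{n\ge1}\subset\mathbb C$. For a sequence $\{a'_n\}_{n\ge 1}\subset\mathbb C$ define rational functions $r_n\colon\overline{\mathbb C}\to\overline{\mathbb C}$ recursively by $r_0(z)=z$, $r_1(z)=\frac{\epsilon_1}{z-a'_1}$, and $$r_{n+2}(z)=r_n(z)+\frac{\epsilon_{n+2}}{r_{n+1}(z)-a'_{n+2}},\qquad n\ge0.$$ Then for every sequence $\{\eta_n\}_{n\ge1}$ of positive numbers there is a sequence $\{a'_n\}_{n\ge1}\subset\mathbb C$ with $|a'_n-a_n|<\eta_n$ for all $n$ such that, for the corresponding $r_n$: (i) for every $n\ge0$, $r_n$ and $r_{n+1}$ have no common pole, and $r_n^{-1}(\infty)\subsetneq r_{n+2}^{-1}(\infty)$; in particular $\infty$ is a pole of $r_n$ exactly when $n$ is even; (ii) for every $n\ge 0$, $r_n$ has exactly $k_n$ poles, all simple; consequently the equation $r_n(z)=a'_{n+1}$ has exactly $k_n$ solutions, all distinct.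
   Context: $\{k_n\}_{n\ge0}$ denotes the Fibonacci sequence: $k_0=k_1=1$, $k_{n+2}=k_{n+1}+k_n$. Poles are counted in $\overline{\mathbb C}$ (including possibly $\infty$). *)

theory Defs
  imports Complex_Main "HOL-Computational_Algebra.Polynomial_Factorial" "HOL-Computational_Algebra.Fraction_Field"
begin

type_synonym ratfun = "complex poly fract"

text \<open>Points of the Riemann sphere: Some z is z in C, None is infinity.\<close>
type_synonym sphere = "complex option"

definition reduced_rep :: "ratfun \<Rightarrow> complex poly \<Rightarrow> complex poly \<Rightarrow> bool" where
  "reduced_rep f p q \<longleftrightarrow> q \<noteq> 0 \<and> coprime p q \<and> f = Fract p q"

definition poles :: "ratfun \<Rightarrow> sphere set" where
  "poles f = {w. \<exists>p q. reduced_rep f p q \<and>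
      (case w of Some z \<Rightarrow> poly q z = 0 | None \<Rightarrow> degree q < degree p)}"

definition simple_pole :: "ratfun \<Rightarrow> sphere \<Rightarrow> bool" where
  "simple_pole f w \<longleftrightarrow> (\<exists>p q. reduced_rep f p q \<and>
      (case w of Some z \<Rightarrow> order z q = 1 | None \<Rightarrow> degree p = degree q + 1))"

definition eval_sphere :: "ratfun \<Rightarrow> sphere \<Rightarrow> sphere" where
  "eval_sphere f w = (SOME v. \<exists>p q. reduced_rep f p q \<and>
      v = (case w of
             Some z \<Rightarrow> (if poly q z = 0 then None else Some (poly p z / poly q z))
           | None \<Rightarrow> (if degree q < degree p then None
                      else if degree p < degree q then Some 0
                      else Some (lead_coeff p / lead_coeff q))))"

fun kfib :: "nat \<Rightarrow> nat" where
  "kfib 0 = 1"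
| "kfib (Suc 0) = 1"
| "kfib (Suc (Suc n)) = kfib (Suc n) + kfib n"

text \<open>The recursively defined rational functions r_n (eps, a' indexed from 1).\<close>
fun rseq :: "(nat \<Rightarrow> real) \<Rightarrow> (nat \<Rightarrow> complex) \<Rightarrow> nat \<Rightarrow> ratfun" where
  "rseq e a 0 = Fract [:0, 1:] 1"
| "rseq e a (Suc 0) = Fract [:complex_of_real (e 1):] [:- a 1, 1:]"
| "rseq e a (Suc (Suc n)) =
     rseq e a n + Fract [:complex_of_real (e (n + 2)):] 1
                    / (rseq e a (Suc n) - Fract [:a (n + 2):] 1)"

end

theory Submission
  imports Defs "HOL-Computational_Algebra.Fundamental_Theorem_Algebra" "HOL-Computational_Algebra.Field_as_Ring"
begin


lemma coprime_root:
  fixes p q :: "complex poly"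
  assumes "coprime p q" "poly p z = 0" "poly q z = 0"
  shows False
proof -
  have "[:-z,1:] dvd p" "[:-z,1:] dvd q" using assms by (simp_all add: poly_eq_0_iff_dvd)
  hence "is_unit [:-z,1:]" using assms(1) coprime_common_divisor by blast
  thus False by (simp add: is_unit_iff_degree)
qed

lemma coprime_by_roots:
  fixes p q :: "complex poly"
  assumes "\<And>z. poly p z = 0 \<Longrightarrow> poly q z = 0 \<Longrightarrow> False"
  shows "coprime p q"
proof (rule ccontr)
  assume nc: "\<not> coprime p q"
  define g where "g = gcd p q"
  have "\<not> is_unit g" using nc by (simp add: g_def coprime_iff_gcd_eq_1 is_unit_gcd)
  show False
  proof (cases "g = 0")
    case True
    hence "p = 0" "q = 0" by (simp_all add: g_def)
    thus False using assms[of 0] by simp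
  next
    case False
    hence "degree g > 0" using \<open>\<not> is_unit g\<close> is_unit_iff_degree by auto
    then obtain z where "poly g z = 0" using alg_closed_imp_poly_has_root by blast
    moreover have "g dvd p" "g dvd q" by (simp_all add: g_def)
    ultimately have "poly p z = 0" "poly q z = 0"
      by (metis dvd_trans poly_eq_0_iff_dvd)+
    thus False using assms by blast
  qed
qed

lemma rep_unique:
  assumes "reduced_rep f p q" "reduced_rep f p' q'"
  shows "\<exists>c. c \<noteq> 0 \<and> p' = smult c p \<and> q' = smult c q"
proof -
  from assms have q: "q \<noteq> 0" "q' \<noteq> 0" and cp: "coprime p q" "coprime p' q'"
    and eq: "Fract p q = Fract p' q'" by (auto simp: reduced_rep_def)
  from eq q have e: "p * q' = p' * q" by (simp add: eq_fract)
  have "q dvd p * q'" using e by simp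
  hence d1: "q dvd q'" using cp(1) by (metis coprime_commute coprime_dvd_mult_right_iff)
  have "q' dvd p' * q" using e by (metis dvd_triv_right)
  hence d2: "q' dvd q" using cp(2) by (metis coprime_commute coprime_dvd_mult_right_iff)
  from d1 obtain k where k: "q' = q * k" by (elim dvdE)
  have k0: "k \<noteq> 0" using k q by auto
  have "degree q' \<le> degree q" using d2 q by (metis dvd_imp_degree_le)
  moreover have "degree q' = degree q + degree k" using k q k0 by (simp add: degree_mult_eq)
  ultimately have "degree k = 0" by simp
  hence kk: "k = [:coeff k 0:]" using degree_0_id by metis
  define c where "c = coeff k 0"
  have c0: "c \<noteq> 0" using k0 kk c_def by force
  have "q' = q * [:c:]" using k kk c_def by simp
  hence qq: "q' = smult c q" by simp
  have "p * smult c q = p' * q" using e qq by simp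
  hence "smult c p * q = p' * q" by (simp add: mult_smult_right mult_smult_left)
  hence "p' = smult c p" using q by (metis mult_right_cancel)
  thus ?thesis using qq c0 by blast
qed



lemma poles_rep:
  assumes "reduced_rep f p q"
  shows "poles f = {w. case w of Some z \<Rightarrow> poly q z = 0 | None \<Rightarrow> degree q < degree p}"
proof -
  have "(\<exists>p' q'. reduced_rep f p' q' \<and> (case w of Some z \<Rightarrow> poly q' z = 0 | None \<Rightarrow> degree q' < degree p'))
        \<longleftrightarrow> (case w of Some z \<Rightarrow> poly q z = 0 | None \<Rightarrow> degree q < degree p)" for w
  proof
    assume "\<exists>p' q'. reduced_rep f p' q' \<and> (case w of Some z \<Rightarrow> poly q' z = 0 | None \<Rightarrow> degree q' < degree p')"
    then obtain p' q' where r: "reduced_rep f p' q'" and c: "(case w of Some z \<Rightarrow> poly q' z = 0 | None \<Rightarrow> degree q' < degree p')" by blast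
    obtain c where "c \<noteq> 0" "p' = smult c p" "q' = smult c q" using rep_unique[OF assms r] by blast
    thus "(case w of Some z \<Rightarrow> poly q z = 0 | None \<Rightarrow> degree q < degree p)" using c
      by (cases w) auto
  next
    assume "(case w of Some z \<Rightarrow> poly q z = 0 | None \<Rightarrow> degree q < degree p)"
    thus "\<exists>p' q'. reduced_rep f p' q' \<and> (case w of Some z \<Rightarrow> poly q' z = 0 | None \<Rightarrow> degree q' < degree p')"
      using assms by blast
  qed
  thus ?thesis unfolding poles_def by blast
qed

definition EV :: "complex poly \<Rightarrow> complex poly \<Rightarrow> complex option \<Rightarrow> complex option" where
  "EV p q w = (case w of
             Some z \<Rightarrow> (if poly q z = 0 then None else Some (poly p z / poly q z))
           | None \<Rightarrow> (if degree q < degree p then None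
                      else if degree p < degree q then Some 0
                      else Some (lead_coeff p / lead_coeff q)))"

lemma EV_smult: "c \<noteq> 0 \<Longrightarrow> EV (smult c p) (smult c q) w = EV p q w"
  by (cases w) (auto simp: EV_def)

lemma eval_rep:
  assumes "reduced_rep f p q"
  shows "eval_sphere f w = EV p q w"
proof -
  have "eval_sphere f w = (SOME v. \<exists>p q. reduced_rep f p q \<and> v = EV p q w)"
    unfolding eval_sphere_def EV_def ..
  also have "\<dots> = EV p q w"
  proof (rule some_equality)
    show "\<exists>p' q'. reduced_rep f p' q' \<and> EV p q w = EV p' q' w" using assms by blast
  next
    fix v assume "\<exists>p' q'. reduced_rep f p' q' \<and> v = EV p' q' w"
    then obtain p' q' where r: "reduced_rep f p' q'" and v: "v = EV p' q' w" by blast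
    obtain c where "c \<noteq> 0" "p' = smult c p" "q' = smult c q" using rep_unique[OF assms r] by blast
    thus "v = EV p q w" using v EV_smult by simp
  qed
  finally show ?thesis .
qed

lemma card_roots_rsf:
  fixes p :: "complex poly"
  assumes "rsquarefree p"
  shows "card {z. poly p z = 0} = degree p"
proof -
  have p0: "p \<noteq> 0" using assms by (simp add: rsquarefree_def)
  have "degree p = degree (smult (lead_coeff p) (\<Prod>z|poly p z = 0. [:-z, 1:]))"
    using complex_poly_decompose_rsquarefree[OF assms] by simp
  also have "\<dots> = degree (\<Prod>z|poly p z = 0. [:-z, 1:])" using p0 by simp
  also have "\<dots> = (\<Sum>z|poly p z = 0. degree [:-z, 1:])"
    by (rule degree_prod_sum_eq) simp
  also have "\<dots> = card {z. poly p z = 0}" by simp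
  finally show ?thesis by simp
qed

lemma wronskian_nz:
  fixes p q :: "complex poly"
  assumes "coprime p q" "q \<noteq> 0" "\<not> (degree p = 0 \<and> degree q = 0)"
  shows "pderiv p * q - p * pderiv q \<noteq> 0"
proof
  assume "pderiv p * q - p * pderiv q = 0"
  hence e: "pderiv p * q = p * pderiv q" by simp
  have "q dvd p * pderiv q" using e by (metis dvd_triv_right)
  hence d: "q dvd pderiv q" using assms(1) by (metis coprime_commute coprime_dvd_mult_right_iff)
  have "pderiv q = 0"
  proof (rule ccontr)
    assume nz: "pderiv q \<noteq> 0"
    have "degree q \<le> degree (pderiv q)" using d nz by (simp add: dvd_imp_degree_le)
    moreover have "degree (pderiv q) = degree q - 1" by (rule degree_pderiv)
    ultimately have "degree q = 0" by simp
    thus False using nz pderiv_eq_0_iff by blast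
  qed
  hence dq: "degree q = 0" using pderiv_eq_0_iff by blast
  have "pderiv p * q = 0" using e \<open>pderiv q = 0\<close> by simp
  hence "pderiv p = 0" using assms(2) by simp
  hence "degree p = 0" using pderiv_eq_0_iff by blast
  thus False using dq assms(3) by blast
qed

lemma kfib_pos: "kfib n \<ge> 1"
  by (induction n rule: kfib.induct) auto



lemma degree_diff_left: "degree q < degree p \<Longrightarrow> degree (p - q) = degree (p::complex poly)"
  by (metis degree_add_eq_left degree_minus diff_conv_add_uminus)

lemma degree_diff_right: "degree p < degree q \<Longrightarrow> degree (p - q) = degree (q::complex poly)"
  by (metis degree_add_eq_right degree_minus diff_conv_add_uminus)

definition good :: "(nat \<Rightarrow> complex) \<Rightarrow> (nat \<Rightarrow> real) \<Rightarrow> nat \<Rightarrow> complex poly \<Rightarrow> complex poly \<Rightarrow> complex poly \<Rightarrow> complex \<Rightarrow> bool" where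
 "good a h m qp pc qc c \<longleftrightarrow> cmod (c - a (Suc m)) < h (Suc m) \<and> rsquarefree (pc - smult c qc)
    \<and> (\<forall>z. poly qp z = 0 \<longrightarrow> poly (pc - smult c qc) z \<noteq> 0) \<and> (odd m \<longrightarrow> c \<noteq> 0)"

definition ALG :: "nat \<Rightarrow> complex poly \<Rightarrow> complex poly \<Rightarrow> complex poly \<Rightarrow> complex poly \<Rightarrow> bool" where
"ALG m pp qp pc qc \<longleftrightarrow> qp \<noteq> 0 \<and> qc \<noteq> 0 \<and> coprime pp qp \<and> coprime pc qc \<and> rsquarefree qp \<and> rsquarefree qc
 \<and> (\<forall>z. poly qp z = 0 \<longrightarrow> poly qc z \<noteq> 0)
 \<and> (even m \<longrightarrow> degree pc = degree qc + 1 \<and> (pp = 0 \<or> degree pp < degree qp))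
 \<and> (odd m \<longrightarrow> degree pc < degree qc \<and> degree pp = degree qp + 1)
 \<and> degree qc + (if even m then 1 else 0) = kfib m
 \<and> (m = 0 \<longrightarrow> pp = 0 \<and> qp = 1 \<and> pc = [:0,1:] \<and> qc = 1)
 \<and> (m \<ge> 1 \<longrightarrow> degree qp + (if odd m then 1 else 0) = kfib (m - 1))"

lemma good_exists:
  assumes A: "ALG m pp qp pc qc" and h: "h (Suc m) > 0"
  shows "\<exists>c. good a h m qp pc qc c"
proof -
  define W where "W = pderiv pc * qc - pc * pderiv qc"
  have cpq: "coprime pc qc" and qc0: "qc \<noteq> 0" and qp0: "qp \<noteq> 0"
    and nr: "\<forall>z. poly qp z = 0 \<longrightarrow> poly qc z \<noteq> 0" using A by (auto simp: ALG_def)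
  have "\<not> (degree pc = 0 \<and> degree qc = 0)"
  proof
    assume d: "degree pc = 0 \<and> degree qc = 0"
    show False
    proof (cases "even m")
      case True thus False using A d by (simp add: ALG_def)
    next
      case False thus False using A d kfib_pos[of m] by (simp add: ALG_def)
    qed
  qed
  hence W0: "W \<noteq> 0" unfolding W_def using wronskian_nz cpq qc0 by blast
  define B where "B = (\<lambda>z. poly pc z / poly qc z) ` ({z. poly qp z = 0} \<union> {z. poly W z = 0}) \<union> {0}"
  have finB: "finite B" unfolding B_def using poly_roots_finite[OF qp0] poly_roots_finite[OF W0] by simp
  define f where "f = (\<lambda>k::nat. a (Suc m) + complex_of_real (h (Suc m) / (real k + 2)))"
  have "inj f"
  proof
    fix x y assume "f x = f y"
    hence "h (Suc m) / (real x + 2) = h (Suc m) / (real y + 2)" unfolding f_def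
      by (metis add_left_cancel of_real_eq_iff)
    thus "x = y" using h by (simp add: field_simps)
  qed
  hence "infinite (range f)" by (rule range_inj_infinite)
  hence "infinite (range f - B)" using finB by (rule Diff_infinite_finite[rotated])
  hence "range f - B \<noteq> {}" by (metis finite.emptyI)
  then obtain c where c: "c \<in> range f" "c \<notin> B" by blast
  then obtain k where k: "c = f k" by blast
  have "c - a (Suc m) = complex_of_real (h (Suc m) / (real k + 2))" by (simp add: k f_def)
  hence "cmod (c - a (Suc m)) = \<bar>h (Suc m) / (real k + 2)\<bar>" by (simp only: norm_of_real)
  also have "\<dots> = h (Suc m) / (real k + 2)" using h by simp
  also have "\<dots> < h (Suc m)" using h by (simp add: field_simps add_pos_nonneg)
  finally have g1: "cmod (c - a (Suc m)) < h (Suc m)" .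
  define s where "s = pc - smult c qc"
  have key: "poly qc z \<noteq> 0 \<and> c = poly pc z / poly qc z" if "poly s z = 0" for z
  proof -
    have e: "poly pc z = c * poly qc z" using that by (simp add: s_def)
    have "poly qc z \<noteq> 0"
    proof
      assume "poly qc z = 0"
      hence "poly pc z = 0" using e by simp
      thus False using coprime_root[OF cpq] \<open>poly qc z = 0\<close> by blast
    qed
    thus ?thesis using e by simp
  qed
  have g2: "rsquarefree s"
    unfolding rsquarefree_roots
  proof (intro allI notI)
    fix z assume zz: "poly s z = 0 \<and> poly (pderiv s) z = 0"
    from key zz have q: "poly qc z \<noteq> 0" and cz: "c = poly pc z / poly qc z" by auto
    have e1: "poly pc z = c * poly qc z" using zz by (simp add: s_def)
    have e2: "poly (pderiv pc) z = c * poly (pderiv qc) z" using zz by (simp add: s_def pderiv_diff pderiv_smult)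
    have "poly W z = 0" unfolding W_def using e1 e2 by simp
    hence "c \<in> B" unfolding B_def using cz by blast
    thus False using c by blast
  qed
  have g3: "\<forall>z. poly qp z = 0 \<longrightarrow> poly s z \<noteq> 0"
  proof (intro allI impI notI)
    fix z assume "poly qp z = 0" "poly s z = 0"
    hence "c \<in> B" unfolding B_def using key by blast
    thus False using c by blast
  qed
  have g4: "c \<noteq> 0" using c unfolding B_def by blast
  show ?thesis unfolding good_def using g1 g2 g3 g4 s_def by blast
qed

lemma deg_s:
  assumes A: "ALG m pp qp pc qc" and g: "good a h m qp pc qc c"
  shows "degree (pc - smult c qc) = (if even m then degree pc else degree qc)"
    and "degree (pc - smult c qc) = kfib m"
proof -
  show 1: "degree (pc - smult c qc) = (if even m then degree pc else degree qc)"
  proof (cases "even m")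
    case True
    hence "degree (smult c qc) < degree pc" using A by (simp add: ALG_def)
    thus ?thesis using True by (simp add: degree_diff_left)
  next
    case False
    hence "c \<noteq> 0" using g by (simp add: good_def)
    hence "degree pc < degree (smult c qc)" using A False by (simp add: ALG_def)
    thus ?thesis using False \<open>c \<noteq> 0\<close> by (simp add: degree_diff_right)
  qed
  show "degree (pc - smult c qc) = kfib m" using A 1 by (auto simp: ALG_def split: if_splits)
qed



lemma ALG_step:
  assumes A: "ALG m pp qp pc qc" and g: "good a h m qp pc qc c" and ep: "e > 0"
    and s_def: "s = pc - smult c qc"
  shows "ALG (Suc m) pc qc (pp * s + smult (complex_of_real e) (qc * qp)) (qp * s)"
proof -
  define E where "E = complex_of_real e"
  have E0: "E \<noteq> 0" using ep by (simp add: E_def)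
  have qp0: "qp \<noteq> 0" and qc0: "qc \<noteq> 0" and cpp: "coprime pp qp" and cpc: "coprime pc qc"
    and rp: "rsquarefree qp" and rc: "rsquarefree qc" and nr: "\<forall>z. poly qp z = 0 \<longrightarrow> poly qc z \<noteq> 0"
    and kc: "degree qc + (if even m then 1 else 0) = kfib m"
    and m0: "m = 0 \<longrightarrow> pp = 0 \<and> qp = 1 \<and> pc = [:0,1:] \<and> qc = 1"
    and kp: "m \<ge> 1 \<longrightarrow> degree qp + (if odd m then 1 else 0) = kfib (m - 1)"
    and dev: "even m \<longrightarrow> degree pc = degree qc + 1 \<and> (pp = 0 \<or> degree pp < degree qp)"
    and dod: "odd m \<longrightarrow> degree pc < degree qc \<and> degree pp = degree qp + 1"
    using A by (auto simp: ALG_def)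
  have rs: "rsquarefree s" and g3: "\<forall>z. poly qp z = 0 \<longrightarrow> poly s z \<noteq> 0"
    and g4: "odd m \<longrightarrow> c \<noteq> 0" using g by (auto simp: good_def s_def)
  have s0: "s \<noteq> 0" using rs by (simp add: rsquarefree_def)
  have ds: "degree s = (if even m then degree pc else degree qc)" "degree s = kfib m"
    using deg_s[OF A g] s_def by auto
  define np where "np = pp * s + smult (complex_of_real e) (qc * qp)"
  have np': "np = pp * s + smult E (qc * qp)" by (simp add: np_def E_def)
  have nq0: "qp * s \<noteq> 0" using qp0 s0 by simp
  have qcs: "poly s z \<noteq> 0" if "poly qc z = 0" for z
  proof
    assume "poly s z = 0"
    hence "poly pc z = 0" using that by (simp add: s_def)
    thus False using coprime_root[OF cpc] that by blast
  qed
  have cop: "coprime np (qp * s)"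
  proof (rule coprime_by_roots)
    fix z assume a1: "poly np z = 0" and a2: "poly (qp * s) z = 0"
    show False
    proof (cases "poly qp z = 0")
      case True
      hence "poly s z \<noteq> 0" using g3 by blast
      moreover have "poly pp z * poly s z = 0" using a1 True by (simp add: np')
      ultimately have "poly pp z = 0" by simp
      thus False using coprime_root[OF cpp] True by blast
    next
      case False
      hence sz: "poly s z = 0" using a2 by simp
      hence "E * poly qc z * poly qp z = 0" using a1 by (simp add: np')
      hence "poly qc z = 0" using False E0 by simp
      thus False using qcs sz by blast
    qed
  qed
  have rnew: "rsquarefree (qp * s)"
    unfolding rsquarefree_def
  proof (intro conjI allI nq0)
    fix z
    have "order z qp = 0 \<or> order z s = 0"
      using g3 by (metis order_root)
    moreover have "order z qp \<le> 1" "order z s \<le> 1" using rp rs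
      unfolding rsquarefree_def by (metis le_refl zero_le_one One_nat_def)+
    moreover have "order z (qp * s) = order z qp + order z s" by (rule order_mult[OF nq0])
    ultimately show "order z (qp * s) = 0 \<or> order z (qp * s) = 1" by linarith
  qed
  have nr2: "\<forall>z. poly qc z = 0 \<longrightarrow> poly (qp * s) z \<noteq> 0"
    using nr qcs by auto
  have dq: "degree (qp * s) = degree qp + degree s" using qp0 s0 by (simp add: degree_mult_eq)
  have dsm: "degree (smult E (qc * qp)) = degree qc + degree qp" using E0 qc0 qp0 by (simp add: degree_mult_eq)
  have degs: "(even (Suc m) \<longrightarrow> degree np = degree (qp * s) + 1 \<and> (pc = 0 \<or> degree pc < degree qc))
    \<and> (odd (Suc m) \<longrightarrow> degree np < degree (qp * s) \<and> degree pc = degree qc + 1)"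
  proof (cases "even m")
    case True
    have dss: "degree s = degree qc + 1" using ds True dev by simp
    have "degree (pp * s) < degree (qp * s)"
    proof (cases "pp = 0")
      case False
      hence "degree pp < degree qp" using dev True by simp
      thus ?thesis using False s0 dq by (simp add: degree_mult_eq)
    qed (simp add: dq dss)
    moreover have "degree (smult E (qc * qp)) < degree (qp * s)" using dsm dq dss by simp
    ultimately have "degree np < degree (qp * s)" unfolding np' by (rule degree_add_less)
    thus ?thesis using True dev by simp
  next
    case False
    have dss: "degree s = degree qc" using ds False by simp
    have pp0: "pp \<noteq> 0" using dod False by auto
    have d1: "degree (pp * s) = degree qp + 1 + degree qc" using pp0 s0 dod False dss by (simp add: degree_mult_eq)
    hence "degree (smult E (qc * qp)) < degree (pp * s)" using dsm by simp
    hence "degree np = degree (pp * s)" unfolding np' by (rule degree_add_eq_left)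
    thus ?thesis using False d1 dq dss dod by simp
  qed
  have kf: "degree (qp * s) + (if even (Suc m) then 1 else 0) = kfib (Suc m)"
  proof (cases m)
    case 0
    thus ?thesis using m0 ds dq by simp
  next
    case (Suc k)
    have "kfib (Suc m) = kfib m + kfib k" using Suc by simp
    thus ?thesis using kc kp ds dq Suc by (auto split: if_splits)
  qed
  have kf2: "degree qc + (if odd (Suc m) then 1 else 0) = kfib (Suc m - 1)" using kc by simp
  show ?thesis unfolding ALG_def np_def[symmetric]
    using qc0 nq0 cpc cop rc rnew nr2 degs kf kf2 by simp
qed



definition chooseC :: "(nat \<Rightarrow> complex) \<Rightarrow> (nat \<Rightarrow> real) \<Rightarrow> nat \<Rightarrow> complex poly \<Rightarrow> complex poly \<Rightarrow> complex poly \<Rightarrow> complex" where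
  "chooseC a h m qp pc qc = (SOME c. good a h m qp pc qc c)"

primrec st :: "(nat \<Rightarrow> real) \<Rightarrow> (nat \<Rightarrow> complex) \<Rightarrow> (nat \<Rightarrow> real) \<Rightarrow> nat \<Rightarrow> complex poly \<times> complex poly \<times> complex poly \<times> complex poly" where
  "st e a h 0 = (0, 1, [:0,1:], 1)"
| "st e a h (Suc m) = (case st e a h m of (pp, qp, pc, qc) \<Rightarrow>
     (pc, qc, pp * (pc - smult (chooseC a h m qp pc qc) qc) + smult (complex_of_real (e (Suc m))) (qc * qp),
      qp * (pc - smult (chooseC a h m qp pc qc) qc)))"

definition aa :: "(nat \<Rightarrow> real) \<Rightarrow> (nat \<Rightarrow> complex) \<Rightarrow> (nat \<Rightarrow> real) \<Rightarrow> nat \<Rightarrow> complex" where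
  "aa e a h n = (if n = 0 then a 0 else (case st e a h (n - 1) of (pp, qp, pc, qc) \<Rightarrow> chooseC a h (n - 1) qp pc qc))"

lemma aa_Suc: "st e a h m = (pp, qp, pc, qc) \<Longrightarrow> aa e a h (Suc m) = chooseC a h m qp pc qc"
  by (simp add: aa_def)

lemma st_Suc': "st e a h m = (pp, qp, pc, qc) \<Longrightarrow> st e a h (Suc m) =
   (pc, qc, pp * (pc - smult (aa e a h (Suc m)) qc) + smult (complex_of_real (e (Suc m))) (qc * qp),
      qp * (pc - smult (aa e a h (Suc m)) qc))"
  by (simp add: aa_Suc)

lemma Fract_step:
  assumes "qp \<noteq> 0" "qc \<noteq> 0" "s = pc - smult c qc" "s \<noteq> 0"
  shows "Fract pp qp + Fract [:E:] 1 / (Fract pc qc - Fract [:c:] 1) = Fract (pp * s + smult E (qc * qp)) (qp * s)"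
proof -
  have 1: "Fract pc qc - Fract [:c:] 1 = Fract s qc" using assms(2,3) by simp
  have 2: "Fract [:E:] 1 / Fract s qc = Fract ([:E:] * qc) s" by simp
  have 3: "Fract pp qp + Fract ([:E:] * qc) s = Fract (pp * s + [:E:] * qc * qp) (qp * s)"
    using assms(1,4) by (simp add: mult.assoc)
  have 4: "[:E:] * qc * qp = smult E (qc * qp)" by simp
  show ?thesis unfolding 1 2 3 4 ..
qed

lemma rsf1: "rsquarefree (1 :: complex poly)"
  by (simp add: rsquarefree_roots)

lemma st_inv:
  assumes e: "\<forall>n\<ge>1. e n > 0" and h: "\<forall>n\<ge>1. h n > 0"
  shows "st e a h m = (pp, qp, pc, qc) \<Longrightarrow> ALG m pp qp pc qc \<and> good a h m qp pc qc (aa e a h (Suc m))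
      \<and> rseq e (aa e a h) m = Fract pc qc \<and> (m \<ge> 1 \<longrightarrow> rseq e (aa e a h) (m - 1) = Fract pp qp)"
proof (induction m arbitrary: pp qp pc qc)
  case 0
  hence st0: "pp = 0" "qp = 1" "pc = [:0,1:]" "qc = 1" by auto
  have A: "ALG 0 pp qp pc qc" unfolding ALG_def st0 by (simp add: rsf1)
  have "\<exists>c. good a h 0 qp pc qc c" using good_exists[OF A] h by auto
  hence "good a h 0 qp pc qc (chooseC a h 0 qp pc qc)" unfolding chooseC_def by (rule someI_ex)
  hence "good a h 0 qp pc qc (aa e a h (Suc 0))" using aa_Suc[OF "0.prems"] by simp
  thus ?case using A st0 by simp
next
  case (Suc m)
  obtain pp0 qp0 pc0 qc0 where sm: "st e a h m = (pp0, qp0, pc0, qc0)" by (cases "st e a h m") auto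
  note IH = Suc.IH[OF sm]
  define c where "c = aa e a h (Suc m)"
  define s where "s = pc0 - smult c qc0"
  have eqs: "pp = pc0" "qp = qc0" "pc = pp0 * s + smult (complex_of_real (e (Suc m))) (qc0 * qp0)" "qc = qp0 * s"
    using Suc.prems st_Suc'[OF sm] by (auto simp: c_def s_def)
  have A0: "ALG m pp0 qp0 pc0 qc0" and g0: "good a h m qp0 pc0 qc0 c" using IH by (auto simp: c_def)
  have A: "ALG (Suc m) pp qp pc qc" unfolding eqs
    by (rule ALG_step[OF A0 g0]) (use e s_def in auto)
  have "\<exists>c. good a h (Suc m) qp pc qc c" using good_exists[OF A] h by auto
  hence "good a h (Suc m) qp pc qc (chooseC a h (Suc m) qp pc qc)" unfolding chooseC_def by (rule someI_ex)
  hence g: "good a h (Suc m) qp pc qc (aa e a h (Suc (Suc m)))" using aa_Suc[OF Suc.prems] by simp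
  have s0: "s \<noteq> 0" using g0 by (simp add: good_def s_def rsquarefree_def)
  have r: "rseq e (aa e a h) (Suc m) = Fract pc qc"
  proof (cases m)
    case 0
    hence "pp0 = 0" "qp0 = 1" "pc0 = [:0,1:]" "qc0 = 1" using A0 by (auto simp: ALG_def)
    thus ?thesis using 0 eqs s_def c_def by simp
  next
    case (Suc k)
    have r1: "rseq e (aa e a h) k = Fract pp0 qp0" "rseq e (aa e a h) (Suc k) = Fract pc0 qc0"
      using IH Suc by auto
    have nz: "qp0 \<noteq> 0" "qc0 \<noteq> 0" using A0 by (auto simp: ALG_def)
    have "rseq e (aa e a h) (Suc m) = Fract pp0 qp0 + Fract [:complex_of_real (e (k + 2)):] 1 /
            (Fract pc0 qc0 - Fract [:c:] 1)" using r1 Suc by (simp add: c_def)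
    also have "\<dots> = Fract (pp0 * s + smult (complex_of_real (e (k + 2))) (qc0 * qp0)) (qp0 * s)"
      by (rule Fract_step[OF nz s_def s0])
    finally show ?thesis using eqs Suc by simp
  qed
  have "rseq e (aa e a h) (Suc m - 1) = Fract pp qp" using IH eqs by simp
  thus ?case using A g r by simp
qed



lemma facts_n:
  assumes e: "\<forall>n\<ge>1. e n > 0" and h: "\<forall>n\<ge>1. h n > 0"
    and sn: "st e a h n = (pp, qp, pc, qc)"
  shows "poles (rseq e (aa e a h) n) = Some ` {z. poly qc z = 0} \<union> (if even n then {None} else {})"
    and "card (poles (rseq e (aa e a h) n)) = kfib n"
    and "\<forall>w\<in>poles (rseq e (aa e a h) n). simple_pole (rseq e (aa e a h) n) w"
    and "card {w. eval_sphere (rseq e (aa e a h) n) w = Some (aa e a h (Suc n))} = kfib n"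
proof -
  have I: "ALG n pp qp pc qc" "good a h n qp pc qc (aa e a h (Suc n))" "rseq e (aa e a h) n = Fract pc qc"
    using st_inv[OF e h sn] by auto
  have qc0: "qc \<noteq> 0" and cpc: "coprime pc qc" and rc: "rsquarefree qc"
    and kc: "degree qc + (if even n then 1 else 0) = kfib n"
    and dev: "even n \<longrightarrow> degree pc = degree qc + 1"
    and dod: "odd n \<longrightarrow> degree pc < degree qc" using I(1) by (auto simp: ALG_def)
  have R: "reduced_rep (rseq e (aa e a h) n) pc qc" using qc0 cpc I(3) by (simp add: reduced_rep_def)
  have dd: "degree qc < degree pc \<longleftrightarrow> even n" using dev dod by auto
  show P: "poles (rseq e (aa e a h) n) = Some ` {z. poly qc z = 0} \<union> (if even n then {None} else {})"
    unfolding poles_rep[OF R] dd by (auto split: option.splits)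
  have fin: "finite {z. poly qc z = 0}" using poly_roots_finite[OF qc0] .
  show "card (poles (rseq e (aa e a h) n)) = kfib n"
    unfolding P using fin card_roots_rsf[OF rc] kc
    by (subst card_Un_disjoint) (auto simp: card_image)
  show "\<forall>w\<in>poles (rseq e (aa e a h) n). simple_pole (rseq e (aa e a h) n) w"
  proof
    fix w assume "w \<in> poles (rseq e (aa e a h) n)"
    hence "case w of Some z \<Rightarrow> order z qc = 1 | None \<Rightarrow> degree pc = degree qc + 1"
      unfolding P using rsquarefree_root_order[OF rc _ qc0] dev by (auto split: if_splits)
    thus "simple_pole (rseq e (aa e a h) n) w" unfolding simple_pole_def using R by blast
  qed
  define c where "c = aa e a h (Suc n)"
  define s where "s = pc - smult c qc"
  have rs: "rsquarefree s" and g4: "odd n \<longrightarrow> c \<noteq> 0" using I(2) by (auto simp: good_def s_def c_def)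
  have ds: "degree s = kfib n" using deg_s(2)[OF I(1) I(2)] by (simp add: s_def c_def)
  have qcs: "poly s z \<noteq> 0" if "poly qc z = 0" for z
  proof
    assume "poly s z = 0"
    hence "poly pc z = 0" using that by (simp add: s_def)
    thus False using coprime_root[OF cpc] that by blast
  qed
  have "{w. eval_sphere (rseq e (aa e a h) n) w = Some c} = Some ` {z. poly s z = 0}"
  proof (intro set_eqI iffI)
    fix w assume "w \<in> {w. eval_sphere (rseq e (aa e a h) n) w = Some c}"
    hence ev: "EV pc qc w = Some c" using eval_rep[OF R] by simp
    show "w \<in> Some ` {z. poly s z = 0}"
    proof (cases w)
      case None
      thus ?thesis using ev dev dod g4 by (cases "even n") (auto simp: EV_def)
    next
      case (Some z)
      hence "poly qc z \<noteq> 0" "poly pc z / poly qc z = c" using ev by (auto simp: EV_def split: if_splits)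
      hence "poly s z = 0" by (simp add: s_def field_simps)
      thus ?thesis using Some by blast
    qed
  next
    fix w assume "w \<in> Some ` {z. poly s z = 0}"
    then obtain z where z: "w = Some z" "poly s z = 0" by blast
    hence q: "poly qc z \<noteq> 0" using qcs by blast
    hence "poly pc z / poly qc z = c" using z by (simp add: s_def field_simps)
    hence "EV pc qc w = Some c" using z q by (simp add: EV_def)
    thus "w \<in> {w. eval_sphere (rseq e (aa e a h) n) w = Some c}" using eval_rep[OF R] by simp
  qed
  thus "card {w. eval_sphere (rseq e (aa e a h) n) w = Some (aa e a h (Suc n))} = kfib n"
    using card_roots_rsf[OF rs] ds by (simp add: c_def card_image)
qed



theorem lemma2p2:
  fixes \<epsilon> :: "nat \<Rightarrow> real" and a :: "nat \<Rightarrow> complex" and \<eta> :: "nat \<Rightarrow> real"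
  assumes "\<forall>n\<ge>1. \<epsilon> n > 0"
    and "\<forall>n\<ge>1. \<eta> n > 0"
  shows "\<exists>a' :: nat \<Rightarrow> complex.
     (\<forall>n\<ge>1. cmod (a' n - a n) < \<eta> n) \<and>
     (\<forall>n. poles (rseq \<epsilon> a' n) \<inter> poles (rseq \<epsilon> a' (Suc n)) = {}
          \<and> poles (rseq \<epsilon> a' n) \<subset> poles (rseq \<epsilon> a' (n + 2))
          \<and> (None \<in> poles (rseq \<epsilon> a' n) \<longleftrightarrow> even n)) \<and>
     (\<forall>n. card (poles (rseq \<epsilon> a' n)) = kfib n
          \<and> (\<forall>w\<in>poles (rseq \<epsilon> a' n). simple_pole (rseq \<epsilon> a' n) w)
          \<and> card {w. eval_sphere (rseq \<epsilon> a' n) w = Some (a' (Suc n))} = kfib n)"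
proof -
  note e = assms(1) and h = assms(2)
  define A where "A = aa \<epsilon> a \<eta>"
  have c1: "\<forall>n\<ge>1. cmod (A n - a n) < \<eta> n"
  proof (intro allI impI)
    fix n :: nat assume "n \<ge> 1"
    then obtain m where m: "n = Suc m" by (cases n) auto
    obtain pp qp pc qc where sm: "st \<epsilon> a \<eta> m = (pp, qp, pc, qc)" by (cases "st \<epsilon> a \<eta> m") auto
    have "good a \<eta> m qp pc qc (A (Suc m))" using st_inv[OF e h sm] by (simp add: A_def)
    thus "cmod (A n - a n) < \<eta> n" using m by (simp add: good_def)
  qed
  have c2: "poles (rseq \<epsilon> A n) \<inter> poles (rseq \<epsilon> A (Suc n)) = {}
          \<and> poles (rseq \<epsilon> A n) \<subset> poles (rseq \<epsilon> A (n + 2))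
          \<and> (None \<in> poles (rseq \<epsilon> A n) \<longleftrightarrow> even n)" for n
  proof -
    obtain pp qp pc qc where s0: "st \<epsilon> a \<eta> n = (pp, qp, pc, qc)" by (cases "st \<epsilon> a \<eta> n") auto
    obtain p1 q1 where s1: "st \<epsilon> a \<eta> (Suc n) = (pc, qc, p1, q1)" using st_Suc'[OF s0] by simp
    define s where "s = p1 - smult (A (Suc (Suc n))) q1"
    obtain p2 where s2: "st \<epsilon> a \<eta> (Suc (Suc n)) = (p1, q1, p2, qc * s)"
      using st_Suc'[OF s1] by (simp add: s_def A_def)
    have P0: "poles (rseq \<epsilon> A n) = Some ` {z. poly qc z = 0} \<union> (if even n then {None} else {})"
      using facts_n(1)[OF e h s0] by (simp add: A_def)
    have P1: "poles (rseq \<epsilon> A (Suc n)) = Some ` {z. poly q1 z = 0} \<union> (if even (Suc n) then {None} else {})"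
      using facts_n(1)[OF e h s1] by (simp add: A_def)
    have P2: "poles (rseq \<epsilon> A (n + 2)) = Some ` {z. poly (qc * s) z = 0} \<union> (if even n then {None} else {})"
      using facts_n(1)[OF e h s2] by (simp add: A_def)
    have I1: "ALG (Suc n) pc qc p1 q1" "good a \<eta> (Suc n) qc p1 q1 (A (Suc (Suc n)))"
      using st_inv[OF e h s1] by (auto simp: A_def)
    have nr: "\<forall>z. poly qc z = 0 \<longrightarrow> poly q1 z \<noteq> 0" using I1(1) by (simp add: ALG_def)
    have g3: "\<forall>z. poly qc z = 0 \<longrightarrow> poly s z \<noteq> 0" using I1(2) by (simp add: good_def s_def)
    have "degree s = kfib (Suc n)" using deg_s(2)[OF I1] by (simp add: s_def)
    hence "degree s > 0" using kfib_pos[of "Suc n"] by simp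
    then obtain z0 where z0: "poly s z0 = 0" using alg_closed_imp_poly_has_root by blast
    have "Some z0 \<in> poles (rseq \<epsilon> A (n + 2))" "Some z0 \<notin> poles (rseq \<epsilon> A n)"
      using z0 g3 unfolding P0 P2 by auto
    moreover have "poles (rseq \<epsilon> A n) \<subseteq> poles (rseq \<epsilon> A (n + 2))" unfolding P0 P2 by auto
    ultimately have "poles (rseq \<epsilon> A n) \<subset> poles (rseq \<epsilon> A (n + 2))" by blast
    moreover have "poles (rseq \<epsilon> A n) \<inter> poles (rseq \<epsilon> A (Suc n)) = {}"
      unfolding P0 P1 using nr by auto
    moreover have "None \<in> poles (rseq \<epsilon> A n) \<longleftrightarrow> even n" unfolding P0 by auto
    ultimately show ?thesis by blast
  qed
  have c3: "card (poles (rseq \<epsilon> A n)) = kfib n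
          \<and> (\<forall>w\<in>poles (rseq \<epsilon> A n). simple_pole (rseq \<epsilon> A n) w)
          \<and> card {w. eval_sphere (rseq \<epsilon> A n) w = Some (A (Suc n))} = kfib n" for n
  proof -
    obtain pp qp pc qc where s0: "st \<epsilon> a \<eta> n = (pp, qp, pc, qc)" by (cases "st \<epsilon> a \<eta> n") auto
    show ?thesis using facts_n(2-4)[OF e h s0] by (simp add: A_def)
  qed
  show ?thesis using c1 c2 c3 by blast
qed

end
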